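(* Consider the resource sharing problem and the Estimation phase of the ENE algorithm described in the context. Let $\mathbf m^{*j}=\arg\max_{\mathbf m}\sum_{n=1}^N\hat U^j_{n,m_n,\ell_n(\mathbf m)}$ be the allocation maximizing the estimated utilities of epoch $j$, and let $E^{j,1}$ be the event $\mathbf m^{*j}\ne\mathbf m^*$. Then $\mathbb P(E^{j,1})=O\left(\exp(-j^{1.4})\right)$ as $j\to\infty$.
   Context: Model. $N$ agents share $M$ resources, with $N\gg M$. Time is slotted. At each time agent $n$ chooses one resource in $\{1,\dots,M\}$; an allocation is $\mathbf m=(m_1,\dots,m_N)$. The load of agent $n$ under $\mathbf m$ is $\ell_n(\mathbf m)=\sum_{k=1}^N\mathbb 1(m_k=m_n)$. Each agent $n$ and resource $m$ has a utility $U_{n,m,1}\in[0,U_{\max}]$, constant in time, drawn once independently from continuous distributions (so the optimal allocation is unique with probability 1). Write $U_{n,m,\ell}=U_{n,m,1}/\ell$. The utility of agent $n$ under $\mathbf m$ is $U_n(\mathbf m)=U_{n,m_n,1}/\ell_n(\mathbf m)$, the welfare is $W(\mathbf m)=\sum_n U_n(\mathbf m)$, and $\mathbf m^*=\arg\max_{\mathbf m}W(\mathbf m)$. An agent accessing a resource observes the reward $U_n(\mathbf m)+\nu$, where the noise $\nu$ is zero-mean sub-Gaussian with variance proxy $b$, i.i.d. over time and agents. Estimation phase of the ENE algorithm. Time is divided into epochs $j=1,2,\dots$; epoch $j$ begins with an Estimation phase of $M+1$ blocks of $j$ time steps. In block $k\le M$ every agent accesses resource $k$ (load $N$), and agent $n$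 sets $\hat U^j_{n,k,N}$ to be the average of all its rewards in block $k$ of the Estimation phase over epochs $1,\dots,j$ (that is $j(j+1)/2$ samples). In block $M+1$, at each time step each agent independently accesses resource 1 with probability $1/2$ and otherwise no resource; $\bar r_n^{j,1,M+1}$ is the average of agent $n$'s rewards over all time steps of block $M+1$ in epochs $1,\dots,j$ in which it accessed resource 1. Agent $n$ estimates the number of agents by $\hat N_n^j=\frac{1}{\ln(1/2)}\ln\left(1-\frac{\bar r_n^{j,1,M+1}}{2\hat U^j_{n,1,N}}\right)$ (rounded to the nearest integer), and sets $\hat U^j_{n,m,\ell}=\frac1\ell\hat N_n^j\hat U^j_{n,m,N}$ for all $m$ and $1\le\ell\le N$. *)

theory Defs
  imports "HOL-Probability.Probability" "HOL-Library.Landau_Symbols"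
begin

text \<open>Agents are 1..N, resources 1..M. U n m is the single-occupancy utility U_{n,m,1}.\<close>

definition load :: "nat \<Rightarrow> (nat \<Rightarrow> nat) \<Rightarrow> nat \<Rightarrow> nat" where
  "load N m n = card {k \<in> {1..N}. m k = m n}"

definition welfare :: "nat \<Rightarrow> (nat \<Rightarrow> nat \<Rightarrow> real) \<Rightarrow> (nat \<Rightarrow> nat) \<Rightarrow> real" where
  "welfare N U m = (\<Sum>n = 1..N. U n (m n) / real (load N m n))"

definition allocs :: "nat \<Rightarrow> nat \<Rightarrow> (nat \<Rightarrow> nat) set" where
  "allocs N M = {1..N} \<rightarrow>\<^sub>E {1..M}"

definition subgaussian :: "'a measure \<Rightarrow> ('a \<Rightarrow> real) \<Rightarrow> real \<Rightarrow> bool" where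
  "subgaussian P X b \<longleftrightarrow> X \<in> borel_measurable P \<and> integrable P X \<and>
     (\<integral>\<omega>. X \<omega> \<partial>P) = 0 \<and>
     (\<forall>l::real. integrable P (\<lambda>\<omega>. exp (l * X \<omega>)) \<and>
        (\<integral>\<omega>. exp (l * X \<omega>) \<partial>P) \<le> exp (l\<^sup>2 * b / 2))"

text \<open>Noise nu (i,k,s,n): noise of agent n at step s (0 \<le> s < i) of block k of the
  Estimation phase of epoch i.  Coin c (i,s,n): whether agent n accesses resource 1
  at step s of block M+1 of epoch i.\<close>
definition est_reward ::
  "nat \<Rightarrow> nat \<Rightarrow> (nat \<Rightarrow> nat \<Rightarrow> real) \<Rightarrow> (nat \<times> nat \<times> nat \<times> nat \<Rightarrow> 'a \<Rightarrow> real)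
   \<Rightarrow> (nat \<times> nat \<times> nat \<Rightarrow> 'a \<Rightarrow> bool) \<Rightarrow> nat \<Rightarrow> nat \<Rightarrow> nat \<Rightarrow> nat \<Rightarrow> 'a \<Rightarrow> real" where
  "est_reward N M U nu c i k s n \<omega> =
     (if k \<le> M then U n k / real N + nu (i, k, s, n) \<omega>
      else U n 1 / real (card {k' \<in> {1..N}. c (i, s, k') \<omega>}) + nu (i, k, s, n) \<omega>)"

definition UhatN ::
  "nat \<Rightarrow> nat \<Rightarrow> (nat \<Rightarrow> nat \<Rightarrow> real) \<Rightarrow> (nat \<times> nat \<times> nat \<times> nat \<Rightarrow> 'a \<Rightarrow> real)
   \<Rightarrow> (nat \<times> nat \<times> nat \<Rightarrow> 'a \<Rightarrow> bool) \<Rightarrow> nat \<Rightarrow> nat \<Rightarrow> nat \<Rightarrow> 'a \<Rightarrow> real" where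
  "UhatN N M U nu c j n k \<omega> =
     (\<Sum>i = 1..j. \<Sum>s < i. est_reward N M U nu c i k s n \<omega>) / (real j * (real j + 1) / 2)"

definition rbar ::
  "nat \<Rightarrow> nat \<Rightarrow> (nat \<Rightarrow> nat \<Rightarrow> real) \<Rightarrow> (nat \<times> nat \<times> nat \<times> nat \<Rightarrow> 'a \<Rightarrow> real)
   \<Rightarrow> (nat \<times> nat \<times> nat \<Rightarrow> 'a \<Rightarrow> bool) \<Rightarrow> nat \<Rightarrow> nat \<Rightarrow> 'a \<Rightarrow> real" where
  "rbar N M U nu c j n \<omega> =
     (\<Sum>(i, s) \<in> {(i, s). i \<in> {1..j} \<and> s < i \<and> c (i, s, n) \<omega>}.
         est_reward N M U nu c i (M + 1) s n \<omega>)
     / real (card {(i, s). i \<in> {1..j} \<and> s < i \<and> c (i, s, n) \<omega>})"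

definition Nhat ::
  "nat \<Rightarrow> nat \<Rightarrow> (nat \<Rightarrow> nat \<Rightarrow> real) \<Rightarrow> (nat \<times> nat \<times> nat \<times> nat \<Rightarrow> 'a \<Rightarrow> real)
   \<Rightarrow> (nat \<times> nat \<times> nat \<Rightarrow> 'a \<Rightarrow> bool) \<Rightarrow> nat \<Rightarrow> nat \<Rightarrow> 'a \<Rightarrow> int" where
  "Nhat N M U nu c j n \<omega> =
     round (ln (1 - rbar N M U nu c j n \<omega> / (2 * UhatN N M U nu c j n 1 \<omega>)) / ln (1 / 2))"

definition Uhat ::
  "nat \<Rightarrow> nat \<Rightarrow> (nat \<Rightarrow> nat \<Rightarrow> real) \<Rightarrow> (nat \<times> nat \<times> nat \<times> nat \<Rightarrow> 'a \<Rightarrow> real)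
   \<Rightarrow> (nat \<times> nat \<times> nat \<Rightarrow> 'a \<Rightarrow> bool) \<Rightarrow> nat \<Rightarrow> nat \<Rightarrow> nat \<Rightarrow> nat \<Rightarrow> 'a \<Rightarrow> real" where
  "Uhat N M U nu c j n m l \<omega> =
     real_of_int (Nhat N M U nu c j n \<omega>) * UhatN N M U nu c j n m \<omega> / real l"

definition est_welfare ::
  "nat \<Rightarrow> nat \<Rightarrow> (nat \<Rightarrow> nat \<Rightarrow> real) \<Rightarrow> (nat \<times> nat \<times> nat \<times> nat \<Rightarrow> 'a \<Rightarrow> real)
   \<Rightarrow> (nat \<times> nat \<times> nat \<Rightarrow> 'a \<Rightarrow> bool) \<Rightarrow> nat \<Rightarrow> 'a \<Rightarrow> (nat \<Rightarrow> nat) \<Rightarrow> real" where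
  "est_welfare N M U nu c j \<omega> m = (\<Sum>n = 1..N. Uhat N M U nu c j n (m n) (load N m n) \<omega>)"

end

theory Submission
  imports Defs "HOL-Real_Asymp.Real_Asymp"
begin

lemma (in prob_space) subg_sum_ge:
  fixes X :: "'i \<Rightarrow> 'a \<Rightarrow> real"
  assumes fin: "finite I" and ne: "I \<noteq> {}"
    and ind: "indep_vars (\<lambda>_. borel) X I"
    and mgf: "\<And>i l. i \<in> I \<Longrightarrow> integrable M (\<lambda>x. exp (l * X i x)) \<and>
                 expectation (\<lambda>x. exp (l * X i x)) \<le> exp (l\<^sup>2 * \<sigma> / 2)"
    and sig: "\<sigma> > 0" and t: "t \<ge> 0"
  shows "prob {x\<in>space M. (\<Sum>i\<in>I. X i x) \<ge> t} \<le> exp (- t\<^sup>2 / (2 * real (card I) * \<sigma>))"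
proof (cases "t = 0")
  case True
  then show ?thesis by simp
next
  case False
  with t have tp: "t > 0" by auto
  define d where "d = real (card I) * \<sigma>"
  have d: "d > 0" using fin ne sig by (simp add: d_def card_gt_0_iff)
  define l where "l = t / d"
  have l: "l > 0" using tp d by (simp add: l_def)
  have rv: "\<And>i. i \<in> I \<Longrightarrow> random_variable borel (X i)"
    using ind unfolding indep_vars_def by blast
  have "ennreal (prob {x\<in>space M. (\<Sum>i\<in>I. X i x) \<ge> t}) = emeasure M {x\<in>space M. (\<Sum>i\<in>I. X i x) \<ge> t}"
    by (simp add: emeasure_eq_measure)
  also have "\<dots> \<le> ennreal (exp (-l*t)) * (\<integral>\<^sup>+x\<in>space M. exp (l * (\<Sum>i\<in>I. X i x)) \<partial>M)"
  proof (intro Chernoff_ineq_nn_integral_ge l)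
    have [measurable]: "(\<lambda>x. \<Sum>i\<in>I. X i x) \<in> borel_measurable M"
      by (auto intro!: borel_measurable_sum rv)
    show "(\<lambda>x. (\<Sum>i\<in>I. X i x) * indicator (space M) x) \<in> borel_measurable M"
      by measurable
  qed auto
  also have "(\<integral>\<^sup>+x\<in>space M. exp (l * (\<Sum>i\<in>I. X i x)) \<partial>M) =
             (\<integral>\<^sup>+x. (\<Prod>i\<in>I. ennreal (exp (l * X i x))) \<partial>M)"
    by (intro nn_integral_cong)
       (simp_all add: sum_distrib_left exp_sum fin prod_ennreal)
  also have "\<dots> = (\<Prod>i\<in>I. \<integral>\<^sup>+x. ennreal (exp (l * X i x)) \<partial>M)"
    by (intro indep_vars_nn_integral fin indep_vars_compose2[OF ind]) auto
  also have "ennreal (exp (-l * t)) * \<dots> \<le>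
               ennreal (exp (-l * t)) * (\<Prod>i\<in>I. ennreal (exp (l\<^sup>2 * \<sigma> / 2)))"
  proof (intro mult_left_mono prod_mono_ennreal)
    fix i assume i: "i \<in> I"
    have "(\<integral>\<^sup>+x. ennreal (exp (l * X i x)) \<partial>M) = ennreal (expectation (\<lambda>x. exp (l * X i x)))"
      using mgf[OF i, of l] by (intro nn_integral_eq_integral) auto
    also have "\<dots> \<le> ennreal (exp (l\<^sup>2 * \<sigma> / 2))"
      using mgf[OF i, of l] by (intro ennreal_leI) auto
    finally show "(\<integral>\<^sup>+x. ennreal (exp (l * X i x)) \<partial>M) \<le> ennreal (exp (l\<^sup>2 * \<sigma> / 2))" .
  qed auto
  also have "\<dots> = ennreal (exp (-l*t) * (\<Prod>i\<in>I. exp (l\<^sup>2 * \<sigma> / 2)))"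
    by (simp add: ennreal_power ennreal_mult)
  also have "exp (-l*t) * (\<Prod>i\<in>I. exp (l\<^sup>2 * \<sigma> / 2)) = exp (d * l\<^sup>2 / 2 - l * t)"
  proof -
    have "(\<Prod>i\<in>I. exp (l\<^sup>2 * \<sigma> / 2)) = exp (d * l\<^sup>2 / 2)"
      by (simp add: d_def flip: exp_of_nat_mult)
    then show ?thesis by (simp add: mult_exp_exp)
  qed
  also have "d * l\<^sup>2 / 2 - l * t = - t\<^sup>2 / (2 * d)"
    using d by (simp add: l_def field_simps power2_eq_square)
  finally show ?thesis
    by (subst (asm) ennreal_le_iff) (simp_all add: d_def mult.assoc)
qed

lemma sum_pow_inv_card:
  assumes fin: "finite A" and aA: "a \<in> A"
  shows "(\<Sum>S\<in>Pow A. of_bool (a \<in> S) / real (card S)) = (2 ^ card A - 1) / real (card A)"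
proof -
  define f where "f x = (\<Sum>S\<in>Pow A. of_bool (x \<in> S) / real (card S))" for x
  have sym: "f a' = f a" if a'A: "a' \<in> A" for a'
  proof -
    define g where "g x = (if x = a then a' else if x = a' then a else x)" for x
    have gg: "g (g x) = x" for x by (auto simp: g_def)
    have injg: "inj g" by (metis gg injI)
    have gA: "g ` A = A"
    proof
      show "g ` A \<subseteq> A" using aA a'A by (auto simp: g_def)
      show "A \<subseteq> g ` A" using aA a'A by (auto simp: g_def image_iff)
    qed
    have bij: "bij_betw (image g) (Pow A) (Pow A)"
    proof (rule bij_betwI[where g="image g"])
      show "(`) g \<in> Pow A \<rightarrow> Pow A" using gA by auto
      show "(`) g \<in> Pow A \<rightarrow> Pow A" using gA by auto
      show "g ` g ` x = x" for x by (simp add: image_image gg)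
      show "g ` g ` y = y" for y by (simp add: image_image gg)
    qed
    have "f a' = (\<Sum>S\<in>Pow A. of_bool (a' \<in> g ` S) / real (card (g ` S)))"
      unfolding f_def by (rule sum.reindex_bij_betw[OF bij, symmetric])
    also have "\<dots> = f a"
      unfolding f_def
    proof (intro sum.cong refl)
      fix S assume "S \<in> Pow A"
      have "card (g ` S) = card S" using injg by (simp add: card_image inj_on_subset)
      moreover have "(a' \<in> g ` S) = (a \<in> S)"
        by (auto simp: g_def image_iff)
      ultimately show "of_bool (a' \<in> g ` S) / real (card (g ` S)) = of_bool (a \<in> S) / real (card S)"
        by simp
    qed
    finally show ?thesis .
  qed
  have "(\<Sum>x\<in>A. f x) = real (card A) * f a"
    using sym by simp
  moreover have "(\<Sum>x\<in>A. f x) = (\<Sum>S\<in>Pow A. \<Sum>x\<in>A. of_bool (x \<in> S) / real (card S))"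
    unfolding f_def by (rule sum.swap)
  moreover have "\<dots> = (\<Sum>S\<in>Pow A. of_bool (S \<noteq> {}))"
  proof (intro sum.cong refl)
    fix S assume S: "S \<in> Pow A"
    have "(\<Sum>x\<in>A. of_bool (x \<in> S) / real (card S)) = (\<Sum>x\<in>A. of_bool (x \<in> S)) / real (card S)"
      by (simp add: sum_divide_distrib)
    also have "(\<Sum>x\<in>A. of_bool (x \<in> S) :: real) = real (card S)"
    proof -
      have "A \<inter> {x. x \<in> S} = S" using S by auto
      then show ?thesis using fin by simp
    qed
    finally show "(\<Sum>x\<in>A. of_bool (x \<in> S) / real (card S)) = of_bool (S \<noteq> {})"
      using S fin by (auto simp: finite_subset)
  qed
  moreover have "(\<Sum>S\<in>Pow A. of_bool (S \<noteq> {}) :: real) = 2 ^ card A - 1"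
  proof -
    have "(\<Sum>S\<in>Pow A. of_bool (S \<noteq> {}) :: real) = (\<Sum>S\<in>Pow A - {{}}. 1)"
      by (rule sum.mono_neutral_cong_right) (auto simp: fin)
    also have "\<dots> = real (card (Pow A - {{}}))" by simp
    also have "card (Pow A - {{}}) = 2 ^ card A - 1"
      using fin by (simp add: card_Diff_singleton card_Pow)
    finally show ?thesis
      by (simp add: of_nat_diff)
  qed
  ultimately have eq: "real (card A) * f a = 2 ^ card A - 1" by linarith
  have "card A > 0" using fin aA by (auto simp: card_gt_0_iff)
  with eq have "f a = (2 ^ card A - 1) / real (card A)" by (simp add: field_simps)
  then show ?thesis by (simp add: f_def)
qed

lemma ratio_close:
  fixes a A e x y z \<epsilon> q :: real
  assumes a: "amin \<le> a" "0 < amin" "a \<le> A" and q: "0 \<le> q" "q \<le> 1"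
    and eps: "\<epsilon> \<le> 1/4" "\<epsilon> \<le> amin/2" "\<epsilon> \<le> \<eta> * amin / (8*(4+2*A))"
    and e: "\<bar>e\<bar> < \<epsilon>" "\<bar>x\<bar> < \<epsilon>" "\<bar>y\<bar> < \<epsilon>" "\<bar>z\<bar> < \<epsilon>"
  shows "\<bar>((a*q + x + z)/(1/2 + y)) / (2*(a+e)) - q\<bar> < \<eta>"
proof -
  have ep: "\<epsilon> > 0" using e by linarith
  have apos: "a > 0" using a by linarith
  have A4: "4 + 2*A > 0" using a by linarith
  have y1: "1 + 2*y \<ge> 1/2" using e eps by linarith
  have ae: "a + e \<ge> a/2" using e eps a by linarith
  define D where "D = (1 + 2*y) * (a + e)"
  have D: "D \<ge> a/4"
  proof -
    have "D \<ge> (1/2) * (a/2)" unfolding D_def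
      by (rule mult_mono) (use y1 ae apos in auto)
    then show ?thesis by simp
  qed
  have Dp: "D > 0" using D apos by linarith
  have t: "((a*q + x + z)/(1/2 + y)) / (2*(a+e)) = (a*q + x + z) / D"
  proof -
    have "(1/2 + y) * (2*(a+e)) = D" unfolding D_def by (simp add: algebra_simps)
    then show ?thesis by (simp add: divide_divide_eq_left)
  qed
  have num: "a*q + x + z - q*D = x + z - q*(2*a*y + e + 2*y*e)"
    unfolding D_def by (simp add: algebra_simps)
  have b1: "\<bar>q*(2*a*y + e + 2*y*e)\<bar> \<le> \<bar>2*a*y + e + 2*y*e\<bar>"
    using q by (simp add: abs_mult mult_left_le_one_le)
  have b2: "\<bar>2*a*y\<bar> \<le> 2*a*\<epsilon>" using apos e by (simp add: abs_mult)
  have b3: "\<bar>2*y*e\<bar> \<le> 2*\<epsilon>*\<epsilon>"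
  proof -
    have "\<bar>y\<bar> * \<bar>e\<bar> \<le> \<epsilon> * \<epsilon>" using e by (intro mult_mono) auto
    then show ?thesis by (simp add: abs_mult)
  qed
  have b4: "2*\<epsilon>*\<epsilon> \<le> \<epsilon>/2" using ep eps by (simp add: mult_left_le)
  have numb: "\<bar>a*q + x + z - q*D\<bar> \<le> \<epsilon> * (4 + 2*a)"
    unfolding num using b1 b2 b3 b4 e by (simp add: algebra_simps)
  have "\<bar>(a*q + x + z) / D - q\<bar> = \<bar>a*q + x + z - q*D\<bar> / D"
    using Dp by (simp add: field_simps abs_div)
  also have "\<dots> \<le> (\<epsilon> * (4 + 2*a)) / (a/4)"
    by (rule frac_le) (use numb D apos ep in auto)
  also have "\<dots> = 4 * \<epsilon> * (4 + 2*a) / a" by simp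
  also have "\<dots> \<le> 4 * \<epsilon> * (4 + 2*A) / amin"
    by (rule frac_le) (use a ep in \<open>auto intro!: mult_left_mono\<close>)
  also have "\<dots> \<le> 4 * (\<eta> * amin / (8*(4+2*A))) * (4 + 2*A) / amin"
    by (intro divide_right_mono mult_right_mono mult_left_mono eps) (use A4 a in auto)
  also have "\<dots> = \<eta> / 2"
  proof -
    have "amin * (4+2*A) > 0" using A4 a by simp
    then have "amin * (4+2*A) \<noteq> 0" by linarith
    then show ?thesis by (simp add: field_simps)
  qed
  also have "\<dots> < \<eta>"
  proof -
    have "\<epsilon> \<le> \<eta> * amin / (8*(4+2*A))" by (fact eps)
    with ep have "\<eta> * amin / (8*(4+2*A)) > 0" by linarith
    then have "\<eta> > 0" using A4 a by (simp add: zero_less_divide_iff zero_less_mult_iff)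
    then show ?thesis by simp
  qed
  finally have fin: "\<bar>(a*q + x + z) / D - q\<bar> < \<eta>" .
  show ?thesis unfolding t by (rule fin)
qed

lemma nhat_round:
  fixes t :: real and N :: nat
  assumes "\<bar>t - (1 - (1/2)^N)\<bar> < (1/2)^N / 4"
  shows "round (ln (1 - t) / ln (1/2)) = int N"
proof -
  define p :: real where "p = (1/2)^N"
  have pp: "p > 0" by (simp add: p_def)
  have "\<bar>t - (1 - p)\<bar> < p / 4" using assms by (simp add: p_def)
  then have "t - (1-p) < p/4 \<and> -(t - (1-p)) < p/4" by (simp only: abs_less_iff)
  then have lo: "1 - t > 3/4 * p" and hi: "1 - t < 5/4 * p" by linarith+
  have ln2: "ln (2::real) > 0" by simp
  have lnp: "ln p = - real N * ln 2" by (simp add: p_def ln_realpow ln_div)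
  have s2: "ln (sqrt 2) = ln 2 / 2" by (simp add: ln_sqrt)
  have "ln (1 - t) < ln (p * sqrt 2)"
  proof -
    have "5/4 < sqrt (2::real)" by (rule real_less_rsqrt) (simp add: power2_eq_square)
    then have "5/4 * p < p * sqrt 2" using pp by simp
    then have h: "1 - t < p * sqrt 2" using hi by linarith
    have "0 < 1 - t" using lo pp by linarith
    then show ?thesis using h pp by (subst ln_less_cancel_iff) auto
  qed
  also have "ln (p * sqrt 2) = - real N * ln 2 + ln 2 / 2"
    using pp by (simp add: ln_mult lnp s2)
  finally have u: "ln (1 - t) < - real N * ln 2 + ln 2 / 2" .
  have "ln (p / sqrt 2) < ln (1 - t)"
  proof -
    have "sqrt (2::real) * 3 > 4"
    proof -
      have "(4/3::real) < sqrt 2" by (rule real_less_rsqrt) (simp add: power2_eq_square)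
      then show ?thesis by simp
    qed
    then have "p / sqrt 2 < 3/4 * p" using pp by (simp add: field_simps)
    then have h: "p / sqrt 2 < 1 - t" using lo by linarith
    have "0 < p / sqrt 2" using pp by simp
    then show ?thesis using h by (subst ln_less_cancel_iff) auto
  qed
  moreover have "ln (p / sqrt 2) = - real N * ln 2 - ln 2 / 2"
    using pp by (simp add: ln_div lnp s2)
  ultimately have l: "- real N * ln 2 - ln 2 / 2 < ln (1 - t)" by simp
  have eq: "ln (1 - t) / ln (1/2) = - ln (1 - t) / ln 2" by (simp add: ln_div)
  have "- ln (1 - t) < (real N + 1/2) * ln 2" using l by (simp add: algebra_simps)
  then have "- ln (1 - t) / ln 2 < real N + 1/2"
    by (simp only: pos_divide_less_eq[OF ln2])
  moreover have "(real N - 1/2) * ln 2 < - ln (1 - t)" using u by (simp add: algebra_simps)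
  then have "real N - 1/2 < - ln (1 - t) / ln 2"
    by (simp only: pos_less_divide_eq[OF ln2])
  ultimately show ?thesis unfolding eq
    by (intro round_unique) auto
qed

lemma (in prob_space) indep_blocks:
  assumes ind: "indep_vars (\<lambda>_. borel) B UNIV"
    and disj: "disjoint_family_on K I"
    and G: "\<And>p. p \<in> I \<Longrightarrow> G p \<in> borel_measurable (PiM (K p) (\<lambda>_. borel))"
  shows "indep_vars (\<lambda>_. borel) (\<lambda>p \<omega>. G p (restrict (\<lambda>x. B x \<omega>) (K p))) I"
proof -
  have "indep_vars (\<lambda>p. PiM (K p) (\<lambda>_. borel)) (\<lambda>p \<omega>. restrict (\<lambda>x. B x \<omega>) (K p)) I"
    by (rule indep_vars_restrict[OF ind]) (use disj in auto)
  then show ?thesis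
    by (rule indep_vars_compose2) (rule G)
qed

locale ene = prob_space P for P :: "'a measure" +
  fixes N M :: nat and U :: "nat \<Rightarrow> nat \<Rightarrow> real" and Umax b :: real
    and nu :: "nat \<times> nat \<times> nat \<times> nat \<Rightarrow> 'a \<Rightarrow> real"
    and c :: "nat \<times> nat \<times> nat \<Rightarrow> 'a \<Rightarrow> bool"
  assumes N1: "1 \<le> N" and M1: "1 \<le> M"
    and U_range: "\<And>n m. n \<in> {1..N} \<Longrightarrow> m \<in> {1..M} \<Longrightarrow> 0 \<le> U n m \<and> U n m \<le> Umax"
    and U1_pos: "\<And>n. n \<in> {1..N} \<Longrightarrow> 0 < U n 1"
    and noise_subg: "\<And>x. subgaussian P (nu x) b"
    and coin_meas: "\<And>y. c y \<in> measurable P (count_space UNIV)"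
    and coin_fair: "\<And>y. prob {\<omega> \<in> space P. c y \<omega>} = 1 / 2"
    and all_indep: "indep_vars (\<lambda>_. borel) (case_sum nu (\<lambda>y \<omega>. of_bool (c y \<omega>) :: real)) UNIV"
begin

abbreviation "B \<equiv> case_sum nu (\<lambda>y \<omega>. of_bool (c y \<omega>) :: real)"

definition "b' = \<bar>b\<bar> + 1"

lemma b'_pos: "b' > 0" by (simp add: b'_def)

lemma nu_meas[measurable]: "nu x \<in> borel_measurable P"
  using noise_subg[of x] by (simp add: subgaussian_def)

lemma c_meas[measurable]: "c y \<in> measurable P (count_space UNIV)"
  by (rule coin_meas)

lemma B_meas[measurable]: "B w \<in> borel_measurable P"
  by (cases w) auto

lemma nu_mgf: "integrable P (\<lambda>\<omega>. exp (l * nu x \<omega>)) \<and> expectation (\<lambda>\<omega>. exp (l * nu x \<omega>)) \<le> exp (l\<^sup>2 * b' / 2)"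
proof -
  have "integrable P (\<lambda>\<omega>. exp (l * nu x \<omega>)) \<and> expectation (\<lambda>\<omega>. exp (l * nu x \<omega>)) \<le> exp (l\<^sup>2 * b / 2)"
    using noise_subg[of x] by (simp add: subgaussian_def)
  moreover have "exp (l\<^sup>2 * b / 2) \<le> exp (l\<^sup>2 * b' / 2)"
    by (auto simp: b'_def intro!: mult_left_mono divide_right_mono)
  ultimately show ?thesis by linarith
qed

lemma E_coin: "expectation (\<lambda>\<omega>. of_bool (c y \<omega>) :: real) = 1/2"
proof -
  have "expectation (\<lambda>\<omega>. of_bool (c y \<omega>) :: real) = expectation (indicator {\<omega> \<in> space P. c y \<omega>})"
    by (intro Bochner_Integration.integral_cong) (auto simp: indicator_def)
  also have "\<dots> = prob {\<omega> \<in> space P. c y \<omega>}"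
    by (simp add: Int_absorb2 Collect_subset)
  finally show ?thesis using coin_fair by simp
qed

lemma pair_indep:
  fixes f g :: "real \<Rightarrow> real"
  assumes uv: "u \<noteq> v"
    and f[measurable]: "f \<in> borel_measurable borel" and g[measurable]: "g \<in> borel_measurable borel"
    and fi: "integrable P (\<lambda>\<omega>. f (B u \<omega>))" and gi: "integrable P (\<lambda>\<omega>. g (B v \<omega>))"
  shows "integrable P (\<lambda>\<omega>. f (B u \<omega>) * g (B v \<omega>)) \<and>
         expectation (\<lambda>\<omega>. f (B u \<omega>) * g (B v \<omega>)) =
         expectation (\<lambda>\<omega>. f (B u \<omega>)) * expectation (\<lambda>\<omega>. g (B v \<omega>))"
proof -
  define h where "h w = (if w = u then f else g)" for w
  have ind: "indep_vars (\<lambda>_. borel) (\<lambda>w \<omega>. h w (B w \<omega>)) {u, v}"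
    by (rule indep_vars_compose2[OF indep_vars_subset[OF all_indep]]) (auto simp: h_def)
  have int: "\<And>w. w \<in> {u, v} \<Longrightarrow> integrable P (\<lambda>\<omega>. h w (B w \<omega>))"
    using fi gi uv by (auto simp: h_def)
  have "integrable P (\<lambda>\<omega>. \<Prod>w\<in>{u,v}. h w (B w \<omega>))"
    by (rule indep_vars_integrable[OF _ ind int]) auto
  moreover have "expectation (\<lambda>\<omega>. \<Prod>w\<in>{u,v}. h w (B w \<omega>)) = (\<Prod>w\<in>{u,v}. expectation (\<lambda>\<omega>. h w (B w \<omega>)))"
    by (rule indep_vars_lebesgue_integral[OF _ ind int]) auto
  ultimately show ?thesis using uv by (simp add: h_def)
qed

lemma Z_mgf: "integrable P (\<lambda>\<omega>. exp (l * (of_bool (c y \<omega>) * nu x \<omega>))) \<and>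
   expectation (\<lambda>\<omega>. exp (l * (of_bool (c y \<omega>) * nu x \<omega>))) \<le> exp (l\<^sup>2 * b' / 2)"
proof -
  have pi: "integrable P (\<lambda>\<omega>. id (B (Inr y) \<omega>) * (\<lambda>v. exp (l * v)) (B (Inl x) \<omega>)) \<and>
         expectation (\<lambda>\<omega>. id (B (Inr y) \<omega>) * (\<lambda>v. exp (l * v)) (B (Inl x) \<omega>)) =
         expectation (\<lambda>\<omega>. id (B (Inr y) \<omega>)) * expectation (\<lambda>\<omega>. (\<lambda>v. exp (l * v)) (B (Inl x) \<omega>))"
  proof (rule pair_indep)
    show "integrable P (\<lambda>\<omega>. id (B (Inr y) \<omega>))"
      by (rule integrable_const_bound[where B=1]) auto
    show "integrable P (\<lambda>\<omega>. exp (l * B (Inl x) \<omega>))" using nu_mgf[of l x] by simp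
  qed auto
  have eq: "(\<lambda>\<omega>. exp (l * (of_bool (c y \<omega>) * nu x \<omega>))) =
        (\<lambda>\<omega>. of_bool (c y \<omega>) * exp (l * nu x \<omega>) + (1 - of_bool (c y \<omega>)))"
    by (auto simp: fun_eq_iff)
  have i1: "integrable P (\<lambda>\<omega>. of_bool (c y \<omega>) * exp (l * nu x \<omega>))" using pi by simp
  have i2: "integrable P (\<lambda>\<omega>. (1 - of_bool (c y \<omega>) :: real))"
    by (rule integrable_const_bound[where B=1]) auto
  have i3: "integrable P (\<lambda>\<omega>. of_bool (c y \<omega>) :: real)"
    by (rule integrable_const_bound[where B=1]) auto
  have "expectation (\<lambda>\<omega>. exp (l * (of_bool (c y \<omega>) * nu x \<omega>))) =
        expectation (\<lambda>\<omega>. of_bool (c y \<omega>) * exp (l * nu x \<omega>)) + expectation (\<lambda>\<omega>. (1 - of_bool (c y \<omega>) :: real))"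
    unfolding eq by (rule Bochner_Integration.integral_add[OF i1 i2])
  also have "expectation (\<lambda>\<omega>. (1 - of_bool (c y \<omega>) :: real)) = 1 - 1/2"
    using i3 by (simp add: Bochner_Integration.integral_diff prob_space E_coin)
  also have "expectation (\<lambda>\<omega>. of_bool (c y \<omega>) * exp (l * nu x \<omega>)) = 1/2 * expectation (\<lambda>\<omega>. exp (l * nu x \<omega>))"
    using pi by (simp add: E_coin)
  also have "1/2 * expectation (\<lambda>\<omega>. exp (l * nu x \<omega>)) + (1 - 1/2) \<le> 1/2 * exp (l\<^sup>2 * b' / 2) + 1/2 * exp (l\<^sup>2 * b' / 2)"
  proof -
    have "1 \<le> exp (l\<^sup>2 * b' / 2)" using b'_pos by simp
    then show ?thesis using nu_mgf[of l x] by linarith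
  qed
  finally show ?thesis using i1 i2 eq by simp
qed

end

context ene begin

definition Cset :: "nat \<Rightarrow> nat \<Rightarrow> 'a \<Rightarrow> nat set" where
  "Cset i s \<omega> = {k \<in> {1..N}. c (i, s, k) \<omega>}"

lemma Cset_sets[measurable]: "{\<omega> \<in> space P. Cset i s \<omega> = S} \<in> sets P"
proof -
  have "{\<omega> \<in> space P. Cset i s \<omega> = S} = {\<omega> \<in> space P. (\<forall>k\<in>{1..N}. c (i,s,k) \<omega> = (k \<in> S)) \<and> S \<subseteq> {1..N}}"
    by (auto simp: Cset_def)
  also have "\<dots> \<in> sets P" by measurable
  finally show ?thesis .
qed

lemma prob_Cset:
  assumes S: "S \<subseteq> {1..N}"
  shows "prob {\<omega> \<in> space P. Cset i s \<omega> = S} = (1/2)^N"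
proof -
  define J where "J = ((\<lambda>k. Inr (i, s, k)) ` {1..N} :: (nat \<times> nat \<times> nat \<times> nat + nat \<times> nat \<times> nat) set)"
  define A :: "_ \<Rightarrow> real set" where "A w = (case w of Inr (_, _, k) \<Rightarrow> (if k \<in> S then {1} else {0}) | Inl _ \<Rightarrow> UNIV)" for w :: "nat \<times> nat \<times> nat \<times> nat + nat \<times> nat \<times> nat"
  have Jne: "J \<noteq> {}" using N1 by (auto simp: J_def)
  have i1: "prob (\<Inter>w\<in>J. B w -` A w \<inter> space P) = (\<Prod>w\<in>J. prob (B w -` A w \<inter> space P))"
    by (rule indep_varsD[OF all_indep Jne]) (auto simp: J_def A_def)
  have i2: "(\<Inter>w\<in>J. B w -` A w \<inter> space P) = {\<omega> \<in> space P. Cset i s \<omega> = S}"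
    using S N1 by (auto simp: J_def A_def Cset_def split: if_splits)
  have i3: "(\<Prod>w\<in>J. prob (B w -` A w \<inter> space P)) = (\<Prod>k\<in>{1..N}. prob (B (Inr (i,s,k)) -` A (Inr (i,s,k)) \<inter> space P))"
    unfolding J_def by (simp add: prod.reindex inj_on_def)
  have i4: "prob (B (Inr (i,s,k)) -` A (Inr (i,s,k)) \<inter> space P) = 1/2" for k
  proof (cases "k \<in> S")
    case True
    then have "B (Inr (i,s,k)) -` A (Inr (i,s,k)) \<inter> space P = {\<omega> \<in> space P. c (i,s,k) \<omega>}"
      by (auto simp: A_def)
    then show ?thesis using coin_fair by simp
  next
    case False
    then have "B (Inr (i,s,k)) -` A (Inr (i,s,k)) \<inter> space P = space P - {\<omega> \<in> space P. c (i,s,k) \<omega>}"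
      by (auto simp: A_def)
    moreover have "{\<omega> \<in> space P. c (i,s,k) \<omega>} \<in> events" by measurable
    ultimately show ?thesis using coin_fair prob_compl by simp
  qed
  have "prob {\<omega> \<in> space P. Cset i s \<omega> = S} = prob (\<Inter>w\<in>J. B w -` A w \<inter> space P)"
    by (simp only: i2)
  also have "\<dots> = (\<Prod>w\<in>J. prob (B w -` A w \<inter> space P))" by (rule i1)
  also have "\<dots> = (\<Prod>k\<in>{1..N}. prob (B (Inr (i,s,k)) -` A (Inr (i,s,k)) \<inter> space P))" by (rule i3)
  also have "\<dots> = (\<Prod>k\<in>{1..N}. (1/2::real))" by (rule prod.cong[OF refl i4])
  also have "\<dots> = (1/2)^N" by simp
  finally show ?thesis .
qed

lemma E_X:
  assumes n: "n \<in> {1..N}"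
  shows "expectation (\<lambda>\<omega>. of_bool (c (i,s,n) \<omega>) * U n 1 / real (card (Cset i s \<omega>)))
         = U n 1 * (1 - (1/2)^N) / real N"
proof -
  define h where "h S = of_bool (n \<in> S) * U n 1 / real (card S)" for S
  have eq: "of_bool (c (i,s,n) \<omega>) * U n 1 / real (card (Cset i s \<omega>)) =
        (\<Sum>S\<in>Pow {1..N}. h S * indicator {\<omega> \<in> space P. Cset i s \<omega> = S} \<omega>)" if "\<omega> \<in> space P" for \<omega>
  proof -
    have "(\<Sum>S\<in>Pow {1..N}. h S * indicator {\<omega> \<in> space P. Cset i s \<omega> = S} \<omega>) =
          (\<Sum>S\<in>Pow {1..N}. if Cset i s \<omega> = S then h S else 0)"
      using that by (intro sum.cong) (auto simp: indicator_def)
    also have "\<dots> = h (Cset i s \<omega>)"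
      by (subst sum.delta') (auto simp: Cset_def)
    finally have calc: "(\<Sum>S\<in>Pow {1..N}. h S * indicator {\<omega> \<in> space P. Cset i s \<omega> = S} \<omega>) = h (Cset i s \<omega>)" .
    have hh: "h (Cset i s \<omega>) = of_bool (c (i,s,n) \<omega>) * U n 1 / real (card (Cset i s \<omega>))"
      using n by (simp add: h_def Cset_def)
    show ?thesis using calc hh by linarith
  qed
  have "expectation (\<lambda>\<omega>. of_bool (c (i,s,n) \<omega>) * U n 1 / real (card (Cset i s \<omega>))) =
        expectation (\<lambda>\<omega>. \<Sum>S\<in>Pow {1..N}. h S * indicator {\<omega> \<in> space P. Cset i s \<omega> = S} \<omega>)"
    by (rule Bochner_Integration.integral_cong[OF refl]) (rule eq)
  also have "\<dots> = (\<Sum>S\<in>Pow {1..N}. expectation (\<lambda>\<omega>. h S * indicator {\<omega> \<in> space P. Cset i s \<omega> = S} \<omega>))"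
  proof (rule Bochner_Integration.integral_sum)
    fix S
    have "integrable P (indicator {\<omega> \<in> space P. Cset i s \<omega> = S} :: _ \<Rightarrow> real)"
      by (intro integrable_real_indicator Cset_sets) (simp add: top.not_eq_extremum[symmetric])
    then show "integrable P (\<lambda>\<omega>. h S * indicator {\<omega> \<in> space P. Cset i s \<omega> = S} \<omega>)"
      by simp
  qed
  also have "\<dots> = (\<Sum>S\<in>Pow {1..N}. h S * (1/2)^N)"
  proof (intro sum.cong refl)
    fix S assume "S \<in> Pow {1..N}"
    then show "expectation (\<lambda>\<omega>. h S * indicator {\<omega> \<in> space P. Cset i s \<omega> = S} \<omega>) = h S * (1/2)^N"
      using prob_Cset[of S] by (simp add: Int_absorb2 Collect_subset)
  qed
  also have "\<dots> = U n 1 * (1/2)^N * (\<Sum>S\<in>Pow {1..N}. of_bool (n \<in> S) / real (card S))"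
    by (simp add: h_def sum_distrib_left sum_distrib_right mult_ac)
  also have "\<dots> = U n 1 * (1/2)^N * ((2 ^ N - 1) / real N)"
    using sum_pow_inv_card[of "{1..N}" n] n by simp
  also have "\<dots> = U n 1 * (1 - (1/2)^N) / real N"
    by (simp add: field_simps power_divide)
  finally show ?thesis .
qed

end

lemma (in prob_space) subg_sum_abs:
  fixes X :: "'i \<Rightarrow> 'a \<Rightarrow> real"
  assumes fin: "finite I" and ne: "I \<noteq> {}"
    and ind: "indep_vars (\<lambda>_. borel) X I"
    and mgf: "\<And>i l. i \<in> I \<Longrightarrow> integrable M (\<lambda>x. exp (l * X i x)) \<and>
                 expectation (\<lambda>x. exp (l * X i x)) \<le> exp (l\<^sup>2 * \<sigma> / 2)"
    and sig: "\<sigma> > 0" and t: "t \<ge> 0"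
  shows "prob {x\<in>space M. t \<le> \<bar>\<Sum>i\<in>I. X i x\<bar>} \<le> 2 * exp (- t\<^sup>2 / (2 * real (card I) * \<sigma>))"
proof -
  have rv: "\<And>i. i \<in> I \<Longrightarrow> random_variable borel (X i)"
    using ind unfolding indep_vars_def by blast
  have [measurable]: "(\<lambda>x. \<Sum>i\<in>I. X i x) \<in> borel_measurable M"
    by (auto intro!: borel_measurable_sum rv)
  have ind2: "indep_vars (\<lambda>_. borel) (\<lambda>i x. - X i x) I"
    by (rule indep_vars_compose2[OF ind]) auto
  have mgf2: "integrable M (\<lambda>x. exp (l * - X i x)) \<and>
                 expectation (\<lambda>x. exp (l * - X i x)) \<le> exp (l\<^sup>2 * \<sigma> / 2)" if "i \<in> I" for i l
    using mgf[OF that, of "-l"] by simp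
  have ab: "(t \<le> \<bar>a\<bar>) = (t \<le> a \<or> t \<le> - a)" for a :: real by linarith
  have "{x\<in>space M. t \<le> \<bar>\<Sum>i\<in>I. X i x\<bar>} = {x\<in>space M. (\<Sum>i\<in>I. X i x) \<ge> t} \<union> {x\<in>space M. (\<Sum>i\<in>I. - X i x) \<ge> t}"
    unfolding ab sum_negf by blast
  also have "prob \<dots> \<le> prob {x\<in>space M. (\<Sum>i\<in>I. X i x) \<ge> t} + prob {x\<in>space M. (\<Sum>i\<in>I. - X i x) \<ge> t}"
    by (intro measure_Un_le) (auto simp: sum_negf)
  also have "\<dots> \<le> exp (- t\<^sup>2 / (2 * real (card I) * \<sigma>)) + exp (- t\<^sup>2 / (2 * real (card I) * \<sigma>))"
    by (intro add_mono subg_sum_ge[OF fin ne ind mgf sig t] subg_sum_ge[OF fin ne ind2 mgf2 sig t])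
  finally show ?thesis by simp
qed

context ene begin

definition Idx :: "nat \<Rightarrow> (nat \<times> nat) set" where "Idx j = Sigma {1..j} (\<lambda>i. {..<i})"

lemma finite_Idx[simp]: "finite (Idx j)" by (simp add: Idx_def)

lemma card_Idx: "real (card (Idx j)) = real j * (real j + 1) / 2"
proof -
  have "card (Idx j) = (\<Sum>i\<in>{1..j}. i)" by (simp add: Idx_def card_SigmaI)
  also have "real (\<Sum>i\<in>{1..j}. i) = real j * (real j + 1) / 2"
    by (induction j) (auto simp: field_simps)
  finally show ?thesis by simp
qed

lemma Idx_ne: "1 \<le> j \<Longrightarrow> Idx j \<noteq> {}"
proof -
  assume "1 \<le> j"
  then have "(1, 0) \<in> Idx j" by (simp add: Idx_def)
  then show ?thesis by blast
qed

definition blk :: "nat \<times> nat \<times> nat \<times> nat + nat \<times> nat \<times> nat \<Rightarrow> nat \<times> nat" where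
  "blk w = (case w of Inl x \<Rightarrow> (fst x, fst (snd (snd x))) | Inr y \<Rightarrow> (fst y, fst (snd y)))"

definition Kb :: "nat \<times> nat \<Rightarrow> (nat \<times> nat \<times> nat \<times> nat + nat \<times> nat \<times> nat) set" where
  "Kb p = {w. blk w = p}"

lemma Kb_disj: "disjoint_family_on Kb I"
  unfolding disjoint_family_on_def Kb_def by blast

lemma Kb_Inl[simp]: "Inl (fst p, k, snd p, n) \<in> Kb p" by (simp add: Kb_def blk_def)
lemma Kb_Inr[simp]: "Inr (fst p, snd p, k) \<in> Kb p" by (simp add: Kb_def blk_def)

lemma indep_fam:
  assumes G: "\<And>p. p \<in> I \<Longrightarrow> G p \<in> borel_measurable (PiM (Kb p) (\<lambda>_. borel))"
    and F: "\<And>p \<omega>. p \<in> I \<Longrightarrow> G p (restrict (\<lambda>w. B w \<omega>) (Kb p)) = F p \<omega>"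
  shows "indep_vars (\<lambda>_. borel) F I"
proof -
  have "indep_vars (\<lambda>_. borel) (\<lambda>p \<omega>. G p (restrict (\<lambda>w. B w \<omega>) (Kb p))) I"
    by (rule indep_blocks[OF all_indep Kb_disj G])
  moreover have "indep_vars (\<lambda>_. borel) (\<lambda>p \<omega>. G p (restrict (\<lambda>w. B w \<omega>) (Kb p))) I = indep_vars (\<lambda>_. borel) F I"
  proof (rule indep_vars_cong)
    fix p assume "p \<in> I"
    then show "(\<lambda>\<omega>. G p (restrict (\<lambda>w. B w \<omega>) (Kb p))) = F p" using F by (simp add: fun_eq_iff)
  qed simp_all
  ultimately show ?thesis by simp
qed

definition "Fnu k n p \<omega> = nu (fst p, k, snd p, n) \<omega>"
definition "FY n p \<omega> = (of_bool (c (fst p, snd p, n) \<omega>) :: real)"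
definition "FZ n p \<omega> = of_bool (c (fst p, snd p, n) \<omega>) * nu (fst p, M + 1, snd p, n) \<omega>"
definition "FX n p \<omega> = of_bool (c (fst p, snd p, n) \<omega>) * U n 1 / real (card (Cset (fst p) (snd p) \<omega>))"

lemma indep_Fnu: "indep_vars (\<lambda>_. borel) (Fnu k n) I"
proof (rule indep_fam[where G="\<lambda>p f. f (Inl (fst p, k, snd p, n))"])
  fix p show "(\<lambda>f. f (Inl (fst p, k, snd p, n))) \<in> borel_measurable (PiM (Kb p) (\<lambda>_. borel))"
    by (rule measurable_component_singleton) simp
qed (simp add: Fnu_def)

lemma indep_FY: "indep_vars (\<lambda>_. borel) (FY n) I"
proof (rule indep_fam[where G="\<lambda>p f. f (Inr (fst p, snd p, n))"])
  fix p show "(\<lambda>f. f (Inr (fst p, snd p, n))) \<in> borel_measurable (PiM (Kb p) (\<lambda>_. borel))"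
    by (rule measurable_component_singleton) simp
qed (simp add: FY_def)

lemma indep_FZ: "indep_vars (\<lambda>_. borel) (FZ n) I"
proof (rule indep_fam[where G="\<lambda>p f. f (Inr (fst p, snd p, n)) * f (Inl (fst p, M + 1, snd p, n))"])
  fix p
  have m1: "(\<lambda>f::_\<Rightarrow>real. f (Inr (fst p, snd p, n))) \<in> borel_measurable (PiM (Kb p) (\<lambda>_. borel))"
    by (rule measurable_component_singleton) simp
  have m2: "(\<lambda>f::_\<Rightarrow>real. f (Inl (fst p, M + 1, snd p, n))) \<in> borel_measurable (PiM (Kb p) (\<lambda>_. borel))"
    by (rule measurable_component_singleton) simp
  show "(\<lambda>f::_\<Rightarrow>real. f (Inr (fst p, snd p, n)) * f (Inl (fst p, M + 1, snd p, n))) \<in> borel_measurable (PiM (Kb p) (\<lambda>_. borel))"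
    by (rule borel_measurable_times[OF m1 m2])
qed (simp add: FZ_def)

lemma card_Cset_sum: "real (card (Cset i s \<omega>)) = (\<Sum>k\<in>{1..N}. of_bool (c (i, s, k) \<omega>))"
proof -
  have "{1..N} \<inter> {k. c (i, s, k) \<omega>} = Cset i s \<omega>" by (auto simp: Cset_def)
  then show ?thesis by simp
qed

lemma indep_FX: "indep_vars (\<lambda>_. borel) (FX n) I"
proof (rule indep_fam[where G="\<lambda>p f. f (Inr (fst p, snd p, n)) * U n 1 / (\<Sum>k\<in>{1..N}. f (Inr (fst p, snd p, k)))"])
  fix p
  have m3: "(\<lambda>f::_\<Rightarrow>real. f (Inr (fst p, snd p, k))) \<in> borel_measurable (PiM (Kb p) (\<lambda>_. borel))" for k
    by (rule measurable_component_singleton) simp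
  show "(\<lambda>f::_\<Rightarrow>real. f (Inr (fst p, snd p, n)) * U n 1 / (\<Sum>k\<in>{1..N}. f (Inr (fst p, snd p, k)))) \<in> borel_measurable (PiM (Kb p) (\<lambda>_. borel))"
    by (intro borel_measurable_divide borel_measurable_times borel_measurable_const borel_measurable_sum m3)
qed (simp add: FX_def card_Cset_sum)

end

context ene begin

definition "Rb = max 1 Umax"

lemma Rb_pos: "Rb > 0" by (simp add: Rb_def)

lemma Kpos: "1 \<le> j \<Longrightarrow> real (card (Idx j)) > 0"
  using Idx_ne[of j] by (simp add: card_gt_0_iff)

lemma conc_nu:
  assumes j: "1 \<le> j" and eps: "\<epsilon> > 0"
  shows "prob {\<omega>\<in>space P. \<epsilon> * real (card (Idx j)) \<le> \<bar>\<Sum>p\<in>Idx j. Fnu k n p \<omega>\<bar>}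
           \<le> 2 * exp (- (\<epsilon>\<^sup>2 * real (card (Idx j)) / (2 * b')))"
proof -
  define K where "K = real (card (Idx j))"
  have K: "K > 0" using Kpos[OF j] by (simp add: K_def)
  have "prob {\<omega>\<in>space P. \<epsilon> * K \<le> \<bar>\<Sum>p\<in>Idx j. Fnu k n p \<omega>\<bar>} \<le> 2 * exp (- (\<epsilon> * K)\<^sup>2 / (2 * real (card (Idx j)) * b'))"
  proof (rule subg_sum_abs[OF finite_Idx Idx_ne[OF j] indep_Fnu])
    fix i l show "integrable P (\<lambda>x. exp (l * Fnu k n i x)) \<and> expectation (\<lambda>x. exp (l * Fnu k n i x)) \<le> exp (l\<^sup>2 * b' / 2)"
      unfolding Fnu_def by (rule nu_mgf)
  qed (use b'_pos eps K in auto)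
  also have "- (\<epsilon> * K)\<^sup>2 / (2 * real (card (Idx j)) * b') = - (\<epsilon>\<^sup>2 * K / (2 * b'))"
    using K b'_pos by (simp add: K_def power2_eq_square field_simps)
  finally show ?thesis by (simp add: K_def)
qed

lemma conc_Z:
  assumes j: "1 \<le> j" and eps: "\<epsilon> > 0"
  shows "prob {\<omega>\<in>space P. \<epsilon> * real (card (Idx j)) \<le> \<bar>\<Sum>p\<in>Idx j. FZ n p \<omega>\<bar>}
           \<le> 2 * exp (- (\<epsilon>\<^sup>2 * real (card (Idx j)) / (2 * b')))"
proof -
  define K where "K = real (card (Idx j))"
  have K: "K > 0" using Kpos[OF j] by (simp add: K_def)
  have "prob {\<omega>\<in>space P. \<epsilon> * K \<le> \<bar>\<Sum>p\<in>Idx j. FZ n p \<omega>\<bar>} \<le> 2 * exp (- (\<epsilon> * K)\<^sup>2 / (2 * real (card (Idx j)) * b'))"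
  proof (rule subg_sum_abs[OF finite_Idx Idx_ne[OF j] indep_FZ])
    fix i l show "integrable P (\<lambda>x. exp (l * FZ n i x)) \<and> expectation (\<lambda>x. exp (l * FZ n i x)) \<le> exp (l\<^sup>2 * b' / 2)"
      unfolding FZ_def by (rule Z_mgf)
  qed (use b'_pos eps K in auto)
  also have "- (\<epsilon> * K)\<^sup>2 / (2 * real (card (Idx j)) * b') = - (\<epsilon>\<^sup>2 * K / (2 * b'))"
    using K b'_pos by (simp add: K_def power2_eq_square field_simps)
  finally show ?thesis by (simp add: K_def)
qed

lemma hoeff_gen:
  assumes j: "1 \<le> j" and eps: "\<epsilon> > 0"
    and ind: "indep_vars (\<lambda>_. borel) X (Idx j)"
    and rng: "\<And>p \<omega>. 0 \<le> X p \<omega> \<and> X p \<omega> \<le> Rb"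
    and E: "\<And>p. expectation (X p) = \<mu>"
  shows "prob {\<omega>\<in>space P. \<epsilon> * real (card (Idx j)) \<le> \<bar>(\<Sum>p\<in>Idx j. X p \<omega>) - real (card (Idx j)) * \<mu>\<bar>}
           \<le> 2 * exp (- (2 * \<epsilon>\<^sup>2 * real (card (Idx j)) / Rb\<^sup>2))"
proof -
  define K where "K = real (card (Idx j))"
  have K: "K > 0" using Kpos[OF j] by (simp add: K_def)
  interpret H: Hoeffding_ineq P "Idx j" X "\<lambda>_. 0" "\<lambda>_. Rb" "(\<Sum>p\<in>Idx j. expectation (X p))"
  proof unfold_locales
    show "finite (Idx j)" by simp
    show "indep_vars (\<lambda>_. borel) X (Idx j)" by (rule ind)
    fix p assume "p \<in> Idx j"
    show "AE x in P. X p x \<in> {0..Rb}" using rng by simp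
  qed
  have mu: "(\<Sum>p\<in>Idx j. expectation (X p)) = K * \<mu>" by (simp add: E K_def)
  have "prob {\<omega>\<in>space P. \<epsilon> * K \<le> \<bar>(\<Sum>p\<in>Idx j. X p \<omega>) - (\<Sum>p\<in>Idx j. expectation (X p))\<bar>}
        \<le> 2 * exp (-2 * (\<epsilon> * K)\<^sup>2 / (\<Sum>p\<in>Idx j. (Rb - 0)\<^sup>2))"
    by (rule H.Hoeffding_ineq_abs_ge) (use eps K Rb_pos in \<open>auto simp: K_def\<close>)
  also have "-2 * (\<epsilon> * K)\<^sup>2 / (\<Sum>p\<in>Idx j. (Rb - 0)\<^sup>2) = - (2 * \<epsilon>\<^sup>2 * K / Rb\<^sup>2)"
    using K Rb_pos by (simp add: K_def power2_eq_square field_simps)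
  finally show ?thesis by (simp add: K_def mu)
qed

lemma conc_Y:
  assumes j: "1 \<le> j" and eps: "\<epsilon> > 0"
  shows "prob {\<omega>\<in>space P. \<epsilon> * real (card (Idx j)) \<le> \<bar>(\<Sum>p\<in>Idx j. FY n p \<omega>) - real (card (Idx j)) * (1/2)\<bar>}
           \<le> 2 * exp (- (2 * \<epsilon>\<^sup>2 * real (card (Idx j)) / Rb\<^sup>2))"
proof (rule hoeff_gen[OF j eps indep_FY])
  fix p \<omega> show "0 \<le> FY n p \<omega> \<and> FY n p \<omega> \<le> Rb" by (simp add: FY_def Rb_def le_max_iff_disj)
next
  fix p show "expectation (FY n p) = 1/2" unfolding FY_def by (rule E_coin)
qed

lemma conc_X:
  assumes j: "1 \<le> j" and eps: "\<epsilon> > 0" and n: "n \<in> {1..N}"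
  shows "prob {\<omega>\<in>space P. \<epsilon> * real (card (Idx j)) \<le>
              \<bar>(\<Sum>p\<in>Idx j. FX n p \<omega>) - real (card (Idx j)) * (U n 1 * (1 - (1/2)^N) / real N)\<bar>}
           \<le> 2 * exp (- (2 * \<epsilon>\<^sup>2 * real (card (Idx j)) / Rb\<^sup>2))"
proof (rule hoeff_gen[OF j eps indep_FX])
  fix p \<omega>
  have U0: "0 \<le> U n 1" and UM: "U n 1 \<le> Umax" using U_range[OF n, of 1] M1 by auto
  show "0 \<le> FX n p \<omega> \<and> FX n p \<omega> \<le> Rb"
  proof (cases "c (fst p, snd p, n) \<omega>")
    case True
    then have "n \<in> Cset (fst p) (snd p) \<omega>" using n by (simp add: Cset_def)
    moreover have "finite (Cset (fst p) (snd p) \<omega>)" by (simp add: Cset_def)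
    ultimately have "card (Cset (fst p) (snd p) \<omega>) > 0" by (auto simp: card_gt_0_iff)
    then have "real (card (Cset (fst p) (snd p) \<omega>)) \<ge> 1" by linarith
    then have "U n 1 / real (card (Cset (fst p) (snd p) \<omega>)) \<le> U n 1"
      using U0 by (simp add: divide_le_eq mult_le_cancel_left1)
    then show ?thesis using True U0 UM by (simp add: FX_def Rb_def)
  qed (simp add: FX_def Rb_def)
next
  fix p show "expectation (FX n p) = U n 1 * (1 - (1/2)^N) / real N"
    unfolding FX_def using E_X[OF n] by simp
qed

end

context ene begin

lemma sum_Idx: "(\<Sum>i = 1..j. \<Sum>s < i. f i s) = (\<Sum>p\<in>Idx j. f (fst p) (snd p))"
  unfolding Idx_def by (subst sum.Sigma) (auto simp: case_prod_beta)

lemma UhatN_eq: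
  assumes j: "1 \<le> j" and k: "k \<in> {1..M}"
  shows "UhatN N M U nu c j n k \<omega> = U n k / real N + (\<Sum>p\<in>Idx j. Fnu k n p \<omega>) / real (card (Idx j))"
proof -
  define K where "K = real (card (Idx j))"
  have K: "K > 0" using Kpos[OF j] by (simp add: K_def)
  have "(\<Sum>i = 1..j. \<Sum>s < i. est_reward N M U nu c i k s n \<omega>) = (\<Sum>p\<in>Idx j. est_reward N M U nu c (fst p) k (snd p) n \<omega>)"
    by (rule sum_Idx)
  also have "\<dots> = (\<Sum>p\<in>Idx j. U n k / real N + Fnu k n p \<omega>)"
    using k by (simp add: est_reward_def Fnu_def)
  also have "\<dots> = K * (U n k / real N) + (\<Sum>p\<in>Idx j. Fnu k n p \<omega>)"
    by (simp add: sum.distrib K_def)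
  finally have "UhatN N M U nu c j n k \<omega> = (K * (U n k / real N) + (\<Sum>p\<in>Idx j. Fnu k n p \<omega>)) / K"
    by (simp add: UhatN_def K_def card_Idx)
  also have "\<dots> = U n k / real N + (\<Sum>p\<in>Idx j. Fnu k n p \<omega>) / K"
    using K by (simp add: field_simps)
  finally show ?thesis by (simp add: K_def)
qed

lemma rbar_eq:
  "rbar N M U nu c j n \<omega> = ((\<Sum>p\<in>Idx j. FX n p \<omega>) + (\<Sum>p\<in>Idx j. FZ n p \<omega>)) / (\<Sum>p\<in>Idx j. FY n p \<omega>)"
proof -
  define T where "T = {(i, s). i \<in> {1..j} \<and> s < i \<and> c (i, s, n) \<omega>}"
  have T: "T = {p \<in> Idx j. c (fst p, snd p, n) \<omega>}" by (auto simp: T_def Idx_def)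
  have "(\<Sum>(i, s)\<in>T. est_reward N M U nu c i (M + 1) s n \<omega>) =
        (\<Sum>p\<in>Idx j. of_bool (c (fst p, snd p, n) \<omega>) * est_reward N M U nu c (fst p) (M + 1) (snd p) n \<omega>)"
    unfolding T by (simp add: case_prod_beta sum.inter_filter[symmetric] Int_def)
  also have "\<dots> = (\<Sum>p\<in>Idx j. FX n p \<omega> + FZ n p \<omega>)"
    by (intro sum.cong refl) (simp add: est_reward_def FX_def FZ_def Cset_def algebra_simps)
  also have "\<dots> = (\<Sum>p\<in>Idx j. FX n p \<omega>) + (\<Sum>p\<in>Idx j. FZ n p \<omega>)" by (rule sum.distrib)
  finally have num: "(\<Sum>(i, s)\<in>T. est_reward N M U nu c i (M + 1) s n \<omega>) = \<dots>" .
  have "real (card T) = (\<Sum>p\<in>Idx j. FY n p \<omega>)"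
  proof -
    have "Idx j \<inter> {p. c (fst p, snd p, n) \<omega>} = T" by (auto simp: T)
    then show ?thesis by (simp add: FY_def)
  qed
  with num show ?thesis unfolding rbar_def T_def[symmetric] by simp
qed

end

context ene begin

lemma small_div: "\<bar>S\<bar> < \<epsilon> * K \<Longrightarrow> K > 0 \<Longrightarrow> \<bar>S / K\<bar> < (\<epsilon>::real)"
  by (simp add: abs_div pos_divide_less_eq)

lemma Nhat_exact:
  assumes j: "1 \<le> j" and n: "n \<in> {1..N}"
    and amin: "0 < amin" "\<And>n. n \<in> {1..N} \<Longrightarrow> amin \<le> U n 1 / real N"
    and eps: "\<epsilon> \<le> 1/4" "\<epsilon> \<le> amin/2" "\<epsilon> \<le> ((1/2)^N/4) * amin / (8*(4+2*Umax))"
    and d1: "\<bar>\<Sum>p\<in>Idx j. Fnu 1 n p \<omega>\<bar> < \<epsilon> * real (card (Idx j))"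
    and dX: "\<bar>(\<Sum>p\<in>Idx j. FX n p \<omega>) - real (card (Idx j)) * (U n 1 * (1 - (1/2)^N) / real N)\<bar> < \<epsilon> * real (card (Idx j))"
    and dY: "\<bar>(\<Sum>p\<in>Idx j. FY n p \<omega>) - real (card (Idx j)) * (1/2)\<bar> < \<epsilon> * real (card (Idx j))"
    and dZ: "\<bar>\<Sum>p\<in>Idx j. FZ n p \<omega>\<bar> < \<epsilon> * real (card (Idx j))"
  shows "Nhat N M U nu c j n \<omega> = int N"
proof -
  define K where "K = real (card (Idx j))"
  have K: "K > 0" using Kpos[OF j] by (simp add: K_def)
  define a where "a = U n 1 / real N"
  define q :: real where "q = 1 - (1/2)^N"
  define e where "e = (\<Sum>p\<in>Idx j. Fnu 1 n p \<omega>) / K"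
  define x where "x = ((\<Sum>p\<in>Idx j. FX n p \<omega>) - K * (a * q)) / K"
  define y where "y = ((\<Sum>p\<in>Idx j. FY n p \<omega>) - K * (1/2)) / K"
  define z where "z = (\<Sum>p\<in>Idx j. FZ n p \<omega>) / K"
  have aq: "U n 1 * (1 - (1/2)^N) / real N = a * q" by (simp add: a_def q_def)
  have e: "\<bar>e\<bar> < \<epsilon>" unfolding e_def by (rule small_div) (use d1 K in \<open>simp_all add: K_def\<close>)
  have dX': "\<bar>(\<Sum>p\<in>Idx j. FX n p \<omega>) - K * (a * q)\<bar> < \<epsilon> * K" using dX unfolding aq K_def .
  have x: "\<bar>x\<bar> < \<epsilon>" unfolding x_def by (rule small_div[OF dX' K])
  have y: "\<bar>y\<bar> < \<epsilon>" unfolding y_def by (rule small_div) (use dY K in \<open>simp_all add: K_def\<close>)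
  have z: "\<bar>z\<bar> < \<epsilon>" unfolding z_def by (rule small_div) (use dZ K in \<open>simp_all add: K_def\<close>)
  have U1: "UhatN N M U nu c j n 1 \<omega> = a + e"
    using UhatN_eq[OF j, of 1 n \<omega>] M1 by (simp add: a_def e_def K_def)
  have sX: "(\<Sum>p\<in>Idx j. FX n p \<omega>) = K * (a * q + x)" using K by (simp add: x_def field_simps)
  have sY: "(\<Sum>p\<in>Idx j. FY n p \<omega>) = K * (1/2 + y)" using K by (simp add: y_def field_simps)
  have sZ: "(\<Sum>p\<in>Idx j. FZ n p \<omega>) = K * z" using K by (simp add: z_def field_simps)
  have R: "rbar N M U nu c j n \<omega> = (a * q + x + z) / (1/2 + y)"
  proof -
    have "rbar N M U nu c j n \<omega> = (K * (a * q + x) + K * z) / (K * (1/2 + y))"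
      by (simp add: rbar_eq sX sY sZ)
    also have "\<dots> = (K * (a * q + x + z)) / (K * (1/2 + y))" by (simp add: algebra_simps)
    also have "\<dots> = (a * q + x + z) / (1/2 + y)" using K by simp
    finally show ?thesis .
  qed
  have UN: "U n 1 \<le> Umax" "0 < U n 1" using U_range[OF n, of 1] M1 U1_pos[OF n] by auto
  have aA: "a \<le> Umax"
  proof -
    have "a \<le> U n 1" unfolding a_def using N1 UN by (simp add: divide_le_eq mult_le_cancel_left1)
    with UN show ?thesis by linarith
  qed
  have cl: "\<bar>((a*q + x + z)/(1/2 + y)) / (2*(a+e)) - q\<bar> < (1/2)^N/4"
    by (rule ratio_close[OF amin(2)[OF n, folded a_def] amin(1) aA _ _ eps e x y z])
       (auto simp: q_def power_le_one)
  have "Nhat N M U nu c j n \<omega> = round (ln (1 - ((a*q + x + z)/(1/2 + y)) / (2*(a+e))) / ln (1/2))"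
    unfolding Nhat_def R U1 by (rule refl)
  also have "\<dots> = int N"
    by (rule nhat_round) (use cl in \<open>simp add: q_def\<close>)
  finally show ?thesis .
qed

lemma load_ge1: "n \<in> {1..N} \<Longrightarrow> load N m n \<ge> 1"
proof -
  assume n: "n \<in> {1..N}"
  then have "n \<in> {k \<in> {1..N}. m k = m n}" by simp
  then have "card {k \<in> {1..N}. m k = m n} > 0" by (auto simp: card_gt_0_iff)
  then show ?thesis by (simp add: load_def)
qed

lemma est_close:
  assumes j: "1 \<le> j" and m: "m \<in> allocs N M"
    and Nh: "\<And>n. n \<in> {1..N} \<Longrightarrow> Nhat N M U nu c j n \<omega> = int N"
    and dev: "\<And>n k. n \<in> {1..N} \<Longrightarrow> k \<in> {1..M} \<Longrightarrow> \<bar>\<Sum>p\<in>Idx j. Fnu k n p \<omega>\<bar> < \<epsilon> * real (card (Idx j))"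
  shows "\<bar>est_welfare N M U nu c j \<omega> m - welfare N U m\<bar> < real N * real N * \<epsilon>"
proof -
  define K where "K = real (card (Idx j))"
  have K: "K > 0" using Kpos[OF j] by (simp add: K_def)
  define e where "e n = (\<Sum>p\<in>Idx j. Fnu (m n) n p \<omega>) / K" for n
  have mn: "m n \<in> {1..M}" if "n \<in> {1..N}" for n using m that by (auto simp: allocs_def PiE_iff)
  have e: "\<bar>e n\<bar> < \<epsilon>" if "n \<in> {1..N}" for n
    unfolding e_def by (rule small_div) (use dev[OF that mn[OF that]] K in \<open>simp_all add: K_def\<close>)
  have trm: "Uhat N M U nu c j n (m n) (load N m n) \<omega> - U n (m n) / real (load N m n) =
        real N * e n / real (load N m n)" if n: "n \<in> {1..N}" for n
  proof -
    have "UhatN N M U nu c j n (m n) \<omega> = U n (m n) / real N + e n"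
      using UhatN_eq[OF j mn[OF n]] by (simp add: e_def K_def)
    then have "Uhat N M U nu c j n (m n) (load N m n) \<omega> = real N * (U n (m n) / real N + e n) / real (load N m n)"
      by (simp add: Uhat_def Nh[OF n])
    also have "real N * (U n (m n) / real N + e n) = U n (m n) + real N * e n"
      using N1 by (simp add: distrib_left)
    finally show ?thesis by (simp add: add_divide_distrib)
  qed
  have "est_welfare N M U nu c j \<omega> m - welfare N U m = (\<Sum>n=1..N. real N * e n / real (load N m n))"
    by (simp add: est_welfare_def welfare_def sum_subtractf[symmetric] trm)
  also have "\<bar>\<dots>\<bar> \<le> (\<Sum>n=1..N. \<bar>real N * e n / real (load N m n)\<bar>)" by (rule sum_abs)
  also have "\<dots> < (\<Sum>n=1..N. real N * \<epsilon>)"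
  proof (rule sum_strict_mono)
    fix n assume n: "n \<in> {1..N}"
    have l: "real (load N m n) \<ge> 1" using load_ge1[OF n] by simp
    have "\<bar>real N * e n / real (load N m n)\<bar> = real N * \<bar>e n\<bar> / real (load N m n)"
      by (simp add: abs_mult abs_div)
    also have "\<dots> \<le> real N * \<bar>e n\<bar>"
    proof -
      have nn: "0 \<le> real N * \<bar>e n\<bar>" by simp
      have "real N * \<bar>e n\<bar> * 1 \<le> real N * \<bar>e n\<bar> * real (load N m n)" by (rule mult_left_mono[OF l nn])
      then show ?thesis using l by (simp add: divide_le_eq)
    qed
    also have "\<dots> < real N * \<epsilon>" using e[OF n] N1 by simp
    finally show "\<bar>real N * e n / real (load N m n)\<bar> < real N * \<epsilon>" .
  qed (use N1 in auto)
  also have "\<dots> = real N * real N * \<epsilon>" by simp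
  finally show ?thesis .
qed

end

lemma powr_small: "(\<lambda>j::nat. real j powr 1.4) \<in> o(\<lambda>j. real j ^ 2)"
  by real_asymp

context ene begin

lemma rv_indep: "indep_vars (\<lambda>_. borel) X UNIV \<Longrightarrow> X p \<in> borel_measurable P"
  unfolding indep_vars_def by auto

lemma rv_Fnu[measurable]: "Fnu k n p \<in> borel_measurable P" by (rule rv_indep[OF indep_Fnu])
lemma rv_FX[measurable]: "FX n p \<in> borel_measurable P" by (rule rv_indep[OF indep_FX])
lemma rv_FY[measurable]: "FY n p \<in> borel_measurable P" by (rule rv_indep[OF indep_FY])
lemma rv_FZ[measurable]: "FZ n p \<in> borel_measurable P" by (rule rv_indep[OF indep_FZ])

lemma main:
  fixes mstar :: "nat \<Rightarrow> nat"
  assumes mstar_alloc: "mstar \<in> allocs N M"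
    and mstar_unique: "\<And>m. m \<in> allocs N M \<Longrightarrow> m \<noteq> mstar \<Longrightarrow> welfare N U m < welfare N U mstar"
  shows "(\<lambda>j. prob {\<omega> \<in> space P. \<exists>m \<in> allocs N M. m \<noteq> mstar \<and>
              est_welfare N M U nu c j \<omega> mstar \<le> est_welfare N M U nu c j \<omega> m})
         \<in> O(\<lambda>j. exp (- (real j powr 1.4)))"
proof -
  define S where "S = allocs N M - {mstar}"
  have finS: "finite S" by (simp add: S_def allocs_def finite_PiE)
  obtain \<Delta> where \<Delta>: "\<Delta> > 0" "\<And>m. m \<in> S \<Longrightarrow> welfare N U m + \<Delta> \<le> welfare N U mstar"
  proof (cases "S = {}")
    case True
    then show ?thesis using that[of 1] by auto
  next
    case False
    define \<Delta> where "\<Delta> = Min ((\<lambda>m. welfare N U mstar - welfare N U m) ` S)"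
    have "\<Delta> \<in> (\<lambda>m. welfare N U mstar - welfare N U m) ` S"
      unfolding \<Delta>_def using finS False by (intro Min_in) auto
    then obtain m0 where "m0 \<in> S" "\<Delta> = welfare N U mstar - welfare N U m0" by blast
    then have "\<Delta> > 0" using mstar_unique[of m0] by (simp add: S_def)
    moreover have "welfare N U m + \<Delta> \<le> welfare N U mstar" if "m \<in> S" for m
    proof -
      have "\<Delta> \<le> welfare N U mstar - welfare N U m"
        unfolding \<Delta>_def using finS that by (intro Min_le) auto
      then show ?thesis by simp
    qed
    ultimately show ?thesis using that by blast
  qed
  define amin where "amin = Min ((\<lambda>n. U n 1 / real N) ` {1..N})"
  have amin_in: "amin \<in> (\<lambda>n. U n 1 / real N) ` {1..N}"
    unfolding amin_def using N1 by (intro Min_in) auto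
  have amin_pos: "amin > 0" using amin_in U1_pos N1 by auto
  have amin_le: "amin \<le> U n 1 / real N" if "n \<in> {1..N}" for n
    unfolding amin_def using that by (intro Min_le) auto
  have Umax_pos: "Umax > 0" using U_range[of 1 1] U1_pos[of 1] N1 M1 by force
  define \<eta> :: real where "\<eta> = (1/2)^N/4"
  define \<epsilon> where "\<epsilon> = min (min (1/4) (amin/2)) (min (\<eta> * amin / (8*(4+2*Umax))) (\<Delta> / (2 * real N * real N)))"
  have eps_pos: "\<epsilon> > 0" using amin_pos Umax_pos \<Delta> N1 by (simp add: \<epsilon>_def \<eta>_def)
  have eps: "\<epsilon> \<le> 1/4" "\<epsilon> \<le> amin/2" "\<epsilon> \<le> ((1/2)^N/4) * amin / (8*(4+2*Umax))"
    "\<epsilon> \<le> \<Delta> / (2 * real N * real N)"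
  proof -
    have a: "\<epsilon> \<le> min (1/4) (amin/2)" unfolding \<epsilon>_def by (rule min.cobounded1)
    have b: "\<epsilon> \<le> min (\<eta> * amin / (8*(4+2*Umax))) (\<Delta> / (2 * real N * real N))"
      unfolding \<epsilon>_def by (rule min.cobounded2)
    show "\<epsilon> \<le> 1/4" "\<epsilon> \<le> amin/2" using a by auto
    show "\<epsilon> \<le> ((1/2)^N/4) * amin / (8*(4+2*Umax))" "\<epsilon> \<le> \<Delta> / (2 * real N * real N)"
      using b by (auto simp: \<eta>_def)
  qed
  define K where "K j = real (card (Idx j))" for j
  define DU where "DU j = (\<Union>q\<in>{1..N}\<times>{1..M}. {\<omega>\<in>space P. \<epsilon> * K j \<le> \<bar>\<Sum>p\<in>Idx j. Fnu (snd q) (fst q) p \<omega>\<bar>})" for j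
  define DX where "DX j = (\<Union>n\<in>{1..N}. {\<omega>\<in>space P. \<epsilon> * K j \<le>
              \<bar>(\<Sum>p\<in>Idx j. FX n p \<omega>) - K j * (U n 1 * (1 - (1/2)^N) / real N)\<bar>})" for j
  define DY where "DY j = (\<Union>n\<in>{1..N}. {\<omega>\<in>space P. \<epsilon> * K j \<le> \<bar>(\<Sum>p\<in>Idx j. FY n p \<omega>) - K j * (1/2)\<bar>})" for j
  define DZ where "DZ j = (\<Union>n\<in>{1..N}. {\<omega>\<in>space P. \<epsilon> * K j \<le> \<bar>\<Sum>p\<in>Idx j. FZ n p \<omega>\<bar>})" for j
  define Bad where "Bad j = {\<omega> \<in> space P. \<exists>m \<in> allocs N M. m \<noteq> mstar \<and>
              est_welfare N M U nu c j \<omega> mstar \<le> est_welfare N M U nu c j \<omega> m}" for j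
  have sub: "Bad j \<subseteq> DU j \<union> DX j \<union> DY j \<union> DZ j" if j: "1 \<le> j" for j
  proof
    fix \<omega> assume \<omega>: "\<omega> \<in> Bad j"
    show "\<omega> \<in> DU j \<union> DX j \<union> DY j \<union> DZ j"
    proof (rule ccontr)
      assume "\<omega> \<notin> DU j \<union> DX j \<union> DY j \<union> DZ j"
      moreover have "\<omega> \<in> space P" using \<omega> by (simp add: Bad_def)
      ultimately have
        dU: "\<And>n k. n \<in> {1..N} \<Longrightarrow> k \<in> {1..M} \<Longrightarrow> \<bar>\<Sum>p\<in>Idx j. Fnu k n p \<omega>\<bar> < \<epsilon> * K j" and
        dX: "\<And>n. n \<in> {1..N} \<Longrightarrow> \<bar>(\<Sum>p\<in>Idx j. FX n p \<omega>) - K j * (U n 1 * (1 - (1/2)^N) / real N)\<bar> < \<epsilon> * K j" and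
        dY: "\<And>n. n \<in> {1..N} \<Longrightarrow> \<bar>(\<Sum>p\<in>Idx j. FY n p \<omega>) - K j * (1/2)\<bar> < \<epsilon> * K j" and
        dZ: "\<And>n. n \<in> {1..N} \<Longrightarrow> \<bar>\<Sum>p\<in>Idx j. FZ n p \<omega>\<bar> < \<epsilon> * K j"
        unfolding DU_def DX_def DY_def DZ_def by (auto simp: not_le)
      have Nh: "Nhat N M U nu c j n \<omega> = int N" if n: "n \<in> {1..N}" for n
        by (rule Nhat_exact[OF j n amin_pos amin_le eps(1-3)])
           (use dU[OF n, of 1] M1 dX[OF n] dY[OF n] dZ[OF n] in \<open>simp_all add: K_def\<close>)
      from \<omega> obtain m where m: "m \<in> allocs N M" "m \<noteq> mstar"
        and le: "est_welfare N M U nu c j \<omega> mstar \<le> est_welfare N M U nu c j \<omega> m"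
        by (auto simp: Bad_def)
      have c1: "\<bar>est_welfare N M U nu c j \<omega> m - welfare N U m\<bar> < real N * real N * \<epsilon>"
        by (rule est_close[OF j m(1) Nh]) (use dU in \<open>simp_all add: K_def\<close>)
      have c2: "\<bar>est_welfare N M U nu c j \<omega> mstar - welfare N U mstar\<bar> < real N * real N * \<epsilon>"
        by (rule est_close[OF j mstar_alloc Nh]) (use dU in \<open>simp_all add: K_def\<close>)
      have g: "welfare N U m + \<Delta> \<le> welfare N U mstar" using \<Delta>(2)[of m] m by (simp add: S_def)
      have "2 * (real N * real N * \<epsilon>) \<le> \<Delta>"
      proof -
        have "real N * real N > 0" using N1 by simp
        then show ?thesis using eps(4) by (simp add: field_simps)
      qed
      then show False using c1 c2 g le by linarith
    qed
  qed
  define r where "r = min (\<epsilon>\<^sup>2 / (2 * b')) (2 * \<epsilon>\<^sup>2 / Rb\<^sup>2)"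
  have r_pos: "r > 0" using eps_pos b'_pos Rb_pos by (simp add: r_def)
  define C where "C = 2 * real (card ({1..N}\<times>{1..M})) + 6 * real N"
  have bound: "prob (Bad j) \<le> C * exp (- (r * K j))" if j: "1 \<le> j" for j
  proof -
    have Kn: "K j \<ge> 0" by (simp add: K_def)
    have e1: "2 * exp (- (\<epsilon>\<^sup>2 * K j / (2 * b'))) \<le> 2 * exp (- (r * K j))"
    proof -
      have "r * K j \<le> \<epsilon>\<^sup>2 / (2 * b') * K j" by (rule mult_right_mono) (auto simp: r_def Kn)
      then show ?thesis by simp
    qed
    have e2: "2 * exp (- (2 * \<epsilon>\<^sup>2 * K j / Rb\<^sup>2)) \<le> 2 * exp (- (r * K j))"
    proof -
      have "r * K j \<le> 2 * \<epsilon>\<^sup>2 / Rb\<^sup>2 * K j" by (rule mult_right_mono) (auto simp: r_def Kn)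
      then show ?thesis by simp
    qed
    have mU: "DU j \<in> sets P" "DX j \<in> sets P" "DY j \<in> sets P" "DZ j \<in> sets P"
      unfolding DU_def DX_def DY_def DZ_def by measurable
    have pU: "prob (DU j) \<le> real (card ({1..N}\<times>{1..M})) * (2 * exp (- (r * K j)))"
    proof -
      have "prob (DU j) \<le> (\<Sum>q\<in>{1..N}\<times>{1..M}. prob {\<omega>\<in>space P. \<epsilon> * K j \<le> \<bar>\<Sum>p\<in>Idx j. Fnu (snd q) (fst q) p \<omega>\<bar>})"
        unfolding DU_def by (rule finite_measure_subadditive_finite) auto
      also have "\<dots> \<le> real (card ({1..N}\<times>{1..M})) * (2 * exp (- (r * K j)))"
        unfolding K_def by (rule sum_bounded_above, rule order.trans[OF conc_nu[OF j eps_pos] e1[unfolded K_def]])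
      finally show ?thesis .
    qed
    have pX: "prob (DX j) \<le> real N * (2 * exp (- (r * K j)))"
    proof -
      have "prob (DX j) \<le> (\<Sum>n\<in>{1..N}. prob {\<omega>\<in>space P. \<epsilon> * K j \<le>
              \<bar>(\<Sum>p\<in>Idx j. FX n p \<omega>) - K j * (U n 1 * (1 - (1/2)^N) / real N)\<bar>})"
        unfolding DX_def by (rule finite_measure_subadditive_finite) auto
      also have "\<dots> \<le> real (card {1..N}) * (2 * exp (- (r * K j)))"
        unfolding K_def by (rule sum_bounded_above, rule order.trans[OF conc_X[OF j eps_pos] e2[unfolded K_def]]) auto
      finally show ?thesis by simp
    qed
    have pY: "prob (DY j) \<le> real N * (2 * exp (- (r * K j)))"
    proof -
      have "prob (DY j) \<le> (\<Sum>n\<in>{1..N}. prob {\<omega>\<in>space P. \<epsilon> * K j \<le> \<bar>(\<Sum>p\<in>Idx j. FY n p \<omega>) - K j * (1/2)\<bar>})"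
        unfolding DY_def by (rule finite_measure_subadditive_finite) auto
      also have "\<dots> \<le> real (card {1..N}) * (2 * exp (- (r * K j)))"
        unfolding K_def by (rule sum_bounded_above, rule order.trans[OF conc_Y[OF j eps_pos] e2[unfolded K_def]])
      finally show ?thesis by simp
    qed
    have pZ: "prob (DZ j) \<le> real N * (2 * exp (- (r * K j)))"
    proof -
      have "prob (DZ j) \<le> (\<Sum>n\<in>{1..N}. prob {\<omega>\<in>space P. \<epsilon> * K j \<le> \<bar>\<Sum>p\<in>Idx j. FZ n p \<omega>\<bar>})"
        unfolding DZ_def by (rule finite_measure_subadditive_finite) auto
      also have "\<dots> \<le> real (card {1..N}) * (2 * exp (- (r * K j)))"
        unfolding K_def by (rule sum_bounded_above, rule order.trans[OF conc_Z[OF j eps_pos] e1[unfolded K_def]])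
      finally show ?thesis by simp
    qed
    have "prob (Bad j) \<le> prob (DU j \<union> DX j \<union> DY j \<union> DZ j)"
      by (rule finite_measure_mono[OF sub[OF j]]) (use mU in auto)
    also have "\<dots> \<le> prob (DU j) + prob (DX j) + prob (DY j) + prob (DZ j)"
    proof -
      have "prob (DU j \<union> DX j \<union> DY j \<union> DZ j) \<le> prob (DU j \<union> DX j \<union> DY j) + prob (DZ j)"
        by (rule measure_Un_le) (use mU in auto)
      moreover have "prob (DU j \<union> DX j \<union> DY j) \<le> prob (DU j \<union> DX j) + prob (DY j)"
        by (rule measure_Un_le) (use mU in auto)
      moreover have "prob (DU j \<union> DX j) \<le> prob (DU j) + prob (DX j)"
        by (rule measure_Un_le) (use mU in auto)
      ultimately show ?thesis by linarith
    qed
    also have "\<dots> \<le> C * exp (- (r * K j))"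
      using pU pX pY pZ by (simp add: C_def algebra_simps)
    finally show ?thesis .
  qed
  have ev1: "eventually (\<lambda>j::nat. real j powr 1.4 \<le> r / 2 * real j ^ 2) at_top"
    using landau_o.smallD[OF powr_small, of "r/2"] r_pos by (auto elim!: eventually_mono)
  have "eventually (\<lambda>j. norm (prob (Bad j)) \<le> C * norm (exp (- (real j powr 1.4)))) at_top"
    using ev1 eventually_ge_at_top[of "1::nat"]
  proof eventually_elim
    case (elim j)
    have "K j \<ge> real j ^ 2 / 2"
      by (simp add: K_def card_Idx power2_eq_square field_simps)
    then have "r / 2 * real j ^ 2 \<le> r * K j" using r_pos by (simp add: field_simps)
    then have "exp (- (r * K j)) \<le> exp (- (real j powr 1.4))" using elim(1) by simp
    then have "C * exp (- (r * K j)) \<le> C * exp (- (real j powr 1.4))"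
      by (rule mult_left_mono) (simp add: C_def)
    then show ?case using bound[OF elim(2)] by simp
  qed
  moreover have "C > 0"
  proof -
    have "real N \<ge> 1" using N1 by simp
    moreover have "real (card ({1..N}\<times>{1..M})) \<ge> 0" by simp
    ultimately show ?thesis unfolding C_def by linarith
  qed
  ultimately have "(\<lambda>j. prob (Bad j)) \<in> O(\<lambda>j. exp (- (real j powr 1.4)))"
    by (intro landau_o.bigI[of C]) auto
  then show ?thesis by (simp add: Bad_def)
qed

end

theorem lemma4:
  fixes P :: "'a measure"
    and N M :: nat
    and U :: "nat \<Rightarrow> nat \<Rightarrow> real"
    and Umax b :: real
    and nu :: "nat \<times> nat \<times> nat \<times> nat \<Rightarrow> 'a \<Rightarrow> real"
    and c :: "nat \<times> nat \<times> nat \<Rightarrow> 'a \<Rightarrow> bool"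
    and mstar :: "nat \<Rightarrow> nat"
  assumes "prob_space P"
    and "1 \<le> N" and "1 \<le> M"
    and U_range: "\<And>n m. n \<in> {1..N} \<Longrightarrow> m \<in> {1..M} \<Longrightarrow> 0 \<le> U n m \<and> U n m \<le> Umax"
    and U1_pos: "\<And>n. n \<in> {1..N} \<Longrightarrow> 0 < U n 1"
    and mstar_alloc: "mstar \<in> allocs N M"
    and mstar_unique: "\<And>m. m \<in> allocs N M \<Longrightarrow> m \<noteq> mstar \<Longrightarrow> welfare N U m < welfare N U mstar"
    and noise_subg: "\<And>x. subgaussian P (nu x) b"
    and noise_ident: "\<And>x y. distr P borel (nu x) = distr P borel (nu y)"
    and coin_meas: "\<And>y. c y \<in> measurable P (count_space UNIV)"
    and coin_fair: "\<And>y. prob_space.prob P {\<omega> \<in> space P. c y \<omega>} = 1 / 2"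
    and all_indep: "prob_space.indep_vars P (\<lambda>_. borel)
          (case_sum nu (\<lambda>y \<omega>. of_bool (c y \<omega>) :: real)) UNIV"
  shows "(\<lambda>j. prob_space.prob P {\<omega> \<in> space P. \<exists>m \<in> allocs N M. m \<noteq> mstar \<and>
              est_welfare N M U nu c j \<omega> mstar \<le> est_welfare N M U nu c j \<omega> m})
         \<in> O(\<lambda>j. exp (- (real j powr 1.4)))"
proof -
  have E: "ene P N M U Umax b nu c"
    unfolding ene_def ene_axioms_def using assms by blast
  show ?thesis by (rule ene.main[OF E mstar_alloc mstar_unique])
qed

end
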